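(* Let $0\le\beta<1$ and let $f(z)=z+\sum_{n\ge2}a_nz^n$ belong to $\mathcal{H}^{\beta}_{\sigma}$. Then \[ |a_2a_4-a_3^2|\le\begin{cases}\dfrac{(1-\beta)^2\left[1+2(1-\beta)^2\right]}{2}, & \beta\in\left[0,\dfrac{11-\sqrt{37}}{12}\right],\\[3mm] \dfrac{(1-\beta)^2\left[60\beta^2-84\beta-25\right]}{16(9\beta^2-15\beta+1)}, & \beta\in\left(\dfrac{11-\sqrt{37}}{12},1\right).\end{cases} \]
   Context: $\mathbb{U}=\{z\in\mathbb{C}:|z|<1\}$. For analytic $f,g$ on $\mathbb{U}$, $f\prec g$ means there is an analytic $w$ on $\mathbb{U}$ with $w(0)=0$, $|w(z)|<1$, and $f(z)=g(w(z))$. $\sigma$ denotes the class of analytic functions $f(z)=z+\sum_{n\ge2}a_nz^n$ on $\mathbb{U}$ that are univalent in $\mathbb{U}$ and whose inverse $g=f^{-1}$ is also univalent in $\mathbb{U}$. For $0\le\beta<1$, $\mathcal{H}^{\beta}_{\sigma}$ is the set of $f\in\sigma$ with $f'(z)\prec\frac{1+(1-2\beta)z}{1-z}$ ($z\in\mathbb{U}$) and $g'(w)\prec\frac{1+(1-2\beta)w}{1-w}$ ($w\in\mathbb{U}$), where $g=f^{-1}$. *)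

theory Defs
  imports "HOL-Analysis.Analysis"
begin

definition unit_disc :: "complex set" where
  "unit_disc = ball 0 1"

definition subordinate :: "(complex \<Rightarrow> complex) \<Rightarrow> (complex \<Rightarrow> complex) \<Rightarrow> bool" where
  "subordinate F G \<longleftrightarrow>
     (\<exists>w. w holomorphic_on unit_disc \<and> w 0 = 0 \<and>
          (\<forall>z\<in>unit_disc. norm (w z) < 1 \<and> F z = G (w z)))"

text \<open>Bi-univalent class sigma: f normalized and univalent on the disc, and the
  inverse of f (determined near 0) extends to a univalent analytic function g on the disc.\<close>
definition bi_univalent_inv :: "(complex \<Rightarrow> complex) \<Rightarrow> (complex \<Rightarrow> complex) \<Rightarrow> bool" where
  "bi_univalent_inv f g \<longleftrightarrow>
     f holomorphic_on unit_disc \<and> inj_on f unit_disc \<and> f 0 = 0 \<and> deriv f 0 = 1 \<and>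
     g holomorphic_on unit_disc \<and> inj_on g unit_disc \<and> g 0 = 0 \<and>
     (\<forall>\<^sub>F w in nhds 0. f (g w) = w)"

definition sigma_class :: "(complex \<Rightarrow> complex) set" where
  "sigma_class = {f. \<exists>g. bi_univalent_inv f g}"

definition p_beta :: "real \<Rightarrow> complex \<Rightarrow> complex" where
  "p_beta \<beta> z = (1 + complex_of_real (1 - 2 * \<beta>) * z) / (1 - z)"

definition H_sigma :: "real \<Rightarrow> (complex \<Rightarrow> complex) set" where
  "H_sigma \<beta> = {f. \<exists>g. bi_univalent_inv f g \<and>
       subordinate (deriv f) (p_beta \<beta>) \<and> subordinate (deriv g) (p_beta \<beta>)}"

definition taylor_coeff :: "(complex \<Rightarrow> complex) \<Rightarrow> nat \<Rightarrow> complex" where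
  "taylor_coeff f n = (deriv ^^ n) f 0 / of_nat (fact n)"

definition hankel_bound :: "real \<Rightarrow> real" where
  "hankel_bound \<beta> =
     (if \<beta> \<le> (11 - sqrt 37) / 12
      then (1 - \<beta>)^2 * (1 + 2 * (1 - \<beta>)^2) / 2
      else (1 - \<beta>)^2 * (60 * \<beta>^2 - 84 * \<beta> - 25) / (16 * (9 * \<beta>^2 - 15 * \<beta> + 1)))"

end

theory Submission
  imports Defs "HOL-Complex_Analysis.Complex_Analysis"
begin


lemma ev_ball: "\<forall>\<^sub>F z in nhds (0::complex). z \<in> ball 0 1"
  by (rule eventually_nhds_in_open) auto

lemma schwarz_c2:
  fixes w :: "complex \<Rightarrow> complex"
  assumes hol: "w holomorphic_on ball 0 1" and w0: "w 0 = 0"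
    and lt: "\<And>z. norm z < 1 \<Longrightarrow> norm (w z) < 1"
  shows "norm ((deriv ^^ 2) w 0) \<le> 2 * (1 - norm (deriv w 0)^2)"
proof -
  define a where "a = deriv w 0"
  define \<phi> where "\<phi> = (\<lambda>z. if z = 0 then deriv w 0 else (w z - w 0)/(z - 0))"
  have hol\<phi>: "\<phi> holomorphic_on ball 0 1"
    unfolding \<phi>_def by (rule pole_lemma_open[OF hol]) auto
  have w\<phi>: "w z = z * \<phi> z" for z by (auto simp: \<phi>_def w0)
  have \<phi>0: "\<phi> 0 = a" by (simp add: \<phi>_def a_def)
  have W2: "(deriv ^^ 2) w 0 = 2 * deriv \<phi> 0"
  proof -
    have "(deriv ^^ 2) w 0 = (deriv ^^ 2) (\<lambda>z. z * \<phi> z) 0"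
      by (rule higher_deriv_cong_ev) (auto simp: w\<phi>)
    also have "\<dots> = (\<Sum>i = 0..2. of_nat (2 choose i) * (deriv ^^ i) (\<lambda>z. z) 0 * (deriv ^^ (2-i)) \<phi> 0)"
      by (rule higher_deriv_mult[of _ "ball 0 1"]) (auto intro: hol\<phi>)
    also have "\<dots> = 2 * deriv \<phi> 0"
      by (simp add: eval_nat_numeral)
    finally show ?thesis .
  qed
  have S1: "norm a \<le> 1" using Schwarz_Lemma(2)[OF hol w0 lt, of 0] by (simp add: a_def)
  show ?thesis
  proof (cases "norm a = 1")
    case True
    then obtain \<alpha> where \<alpha>: "\<forall>z. norm z < 1 \<longrightarrow> w z = \<alpha> * z"
      using Schwarz_Lemma(3)[OF hol w0 lt, of 0] by (auto simp: a_def)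
    have "(deriv ^^ 2) w 0 = (deriv ^^ 2) (\<lambda>z. \<alpha> * z) 0"
      by (rule higher_deriv_cong_ev) (use ev_ball \<alpha> in \<open>auto elim!: eventually_mono\<close>)
    then show ?thesis using True by (simp add: a_def)
  next
    case False
    then have a1: "norm a < 1" using S1 by auto
    have \<phi>lt: "norm (\<phi> z) < 1" if z: "norm z < 1" for z
    proof (cases "z = 0")
      case True then show ?thesis using \<phi>0 a1 by simp
    next
      case z0: False
      have le: "norm (w z) \<le> norm z" using Schwarz_Lemma(1)[OF hol w0 lt z] .
      have "norm (w z) \<noteq> norm z"
      proof
        assume eq: "norm (w z) = norm z"
        then obtain \<alpha> where \<alpha>: "\<forall>z. norm z < 1 \<longrightarrow> w z = \<alpha> * z" and n\<alpha>: "norm \<alpha> = 1"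
          using Schwarz_Lemma(3)[OF hol w0 lt, of 0] z z0 by auto
        have "deriv w 0 = deriv (\<lambda>z. \<alpha> * z) 0"
          by (rule deriv_cong_ev) (use ev_ball \<alpha> in \<open>auto elim!: eventually_mono\<close>)
        then have "a = \<alpha>" by (simp add: a_def)
        with n\<alpha> False show False by simp
      qed
      with le have "norm (w z) < norm z" by simp
      then show ?thesis using z0 by (simp add: \<phi>_def w0 norm_divide divide_simps)
    qed
    define M where "M = Moebius_function 0 a"
    have Mform: "M u = (u - a) / (1 - cnj a * u)" for u
      by (simp add: M_def Moebius_function_simple)
    define \<psi> where "\<psi> = (\<lambda>z. M (\<phi> z))"
    have hol\<psi>: "\<psi> holomorphic_on ball 0 1"
    proof -
      have "(M \<circ> \<phi>) holomorphic_on ball 0 1"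
        by (rule holomorphic_on_compose_gen[OF hol\<phi> _, of _ "ball 0 1"])
           (use a1 \<phi>lt Moebius_function_holomorphic in \<open>auto simp: M_def\<close>)
      then show ?thesis by (simp add: \<psi>_def o_def)
    qed
    have \<psi>0: "\<psi> 0 = 0" by (simp add: \<psi>_def \<phi>0 M_def Moebius_function_eq_zero)
    have \<psi>lt: "norm (\<psi> z) < 1" if "norm z < 1" for z
      unfolding \<psi>_def M_def by (rule Moebius_function_norm_lt_1[OF a1 \<phi>lt[OF that]])
    have dS: "norm (deriv \<psi> 0) \<le> 1" using Schwarz_Lemma(2)[OF hol\<psi> \<psi>0 \<psi>lt, of 0] by simp
    have ne: "1 - cnj a * a \<noteq> 0"
    proof
      assume "1 - cnj a * a = 0"
      then have "cnj a * a = 1" by simp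
      then have "norm (cnj a * a) = 1" by simp
      then have "norm a ^ 2 = 1" by (simp add: norm_mult power2_eq_square)
      moreover have "norm a ^ 2 < 1" using a1 by (simp add: abs_square_less_1)
      ultimately show False by simp
    qed
    have dM: "(M has_field_derivative 1 / (1 - cnj a * a)) (at a)"
      unfolding Mform[abs_def]
      using ne by (auto intro!: derivative_eq_intros simp: power2_eq_square)
    have d\<phi>: "(\<phi> has_field_derivative deriv \<phi> 0) (at 0)"
      using hol\<phi> by (intro holomorphic_derivI[of _ "ball 0 1"]) auto
    have "(\<psi> has_field_derivative 1 / (1 - cnj a * a) * deriv \<phi> 0) (at 0)"
      unfolding \<psi>_def using DERIV_chain2[OF dM[folded \<phi>0] d\<phi>] \<phi>0 by simp
    then have dpsi: "deriv \<psi> 0 = deriv \<phi> 0 / (1 - cnj a * a)" by (simp add: DERIV_imp_deriv)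
    have e2: "1 - cnj a * a = of_real (1 - norm a ^ 2)"
      by (metis complex_norm_square mult.commute of_real_diff of_real_1 of_real_power)
    have pos: "0 < 1 - norm a ^ 2" using a1 by (simp add: abs_square_less_1)
    have n2: "norm (1 - cnj a * a) = 1 - norm a ^ 2"
      unfolding e2 norm_of_real using pos by simp
    have "norm (deriv \<phi> 0) / (1 - norm a ^ 2) \<le> 1"
      using dS unfolding dpsi norm_divide n2 .
    then have "norm (deriv \<phi> 0) \<le> 1 - norm a ^ 2"
      using pos by (simp add: divide_le_eq)
    then show ?thesis using W2 by (simp add: norm_mult a_def)
  qed
qed



lemma schwarz_c3:
  fixes w :: "complex \<Rightarrow> complex"
  assumes hol: "w holomorphic_on ball 0 1"
    and lt: "\<And>z. norm z < 1 \<Longrightarrow> norm (w z) < 1"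
  shows "norm ((deriv ^^ 3) w 0) \<le> 6"
proof (rule ccontr)
  assume "\<not> ?thesis"
  then have big: "norm ((deriv ^^ 3) w 0) > 6" by simp
  have bnd: "norm ((deriv ^^ 3) w 0) \<le> 6 / r^3" if r: "0 < r" "r < 1" for r
  proof -
    have "norm ((deriv ^^ 3) w 0) \<le> (fact 3) * 1 / r^3"
    proof (rule Cauchy_inequality)
      show "w holomorphic_on ball 0 r" using hol by (rule holomorphic_on_subset) (use r in auto)
      show "continuous_on (cball 0 r) w"
        using holomorphic_on_imp_continuous_on[OF hol] by (rule continuous_on_subset) (use r in auto)
      show "norm (w x) \<le> 1" if "norm (0 - x) = r" for x using lt[of x] that r by auto
    qed (use r in auto)
    then show ?thesis by (simp add: fact_numeral)
  qed
  have "((\<lambda>r. 6 / r^3) \<longlongrightarrow> 6 / 1^3) (at_left (1::real))"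
    by (intro tendsto_intros) auto
  then have "\<forall>\<^sub>F r in at_left (1::real). 6 / r^3 < norm ((deriv ^^ 3) w 0)"
    using big by (simp add: order_tendstoD(2))
  moreover have "\<forall>\<^sub>F r in at_left (1::real). 0 < r \<and> r < 1"
    using eventually_at_left_real[of 0 "1::real"] by simp
  ultimately have "\<forall>\<^sub>F r in at_left (1::real). False"
    by eventually_elim (use bnd in force)
  then show False by (simp add: trivial_limit_at_left_real)
qed



lemma poly_ineq:
  fixes X Y U :: real
  assumes "0 \<le> X" "X \<le> 1" "0 \<le> Y" "Y \<le> 1 - X^2" "0 \<le> U" "U \<le> 1"
  shows "X*U/2 + X^2*Y/9 + X^4/18 + 4*Y^2/9 \<le> 5/9"
proof -
  have "X*U \<le> X" using assms by (simp add: mult_left_le)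
  moreover have "X^2*Y \<le> X^2*(1-X^2)" using assms by (simp add: mult_left_mono)
  moreover have "Y^2 \<le> (1-X^2)^2" using assms by (simp add: power_mono)
  moreover have "X/2 + X^2*(1-X^2)/9 + X^4/18 + 4*(1-X^2)^2/9 \<le> 5/9"
  proof -
    have q: "0 \<le> 7*X*(X-1/3)^2 + 35/3*(X-1/3)^2 + 19/27" using assms by simp
    have "5/9 - (X/2 + X^2*(1-X^2)/9 + X^4/18 + 4*(1-X^2)^2/9)
          = (1-X) * (7*X*(X-1/3)^2 + 35/3*(X-1/3)^2 + 19/27) / 18"
      by (simp add: field_simps power2_eq_square power4_eq_xxxx)
    moreover have "0 \<le> (1-X) * (7*X*(X-1/3)^2 + 35/3*(X-1/3)^2 + 19/27)"
      using q assms by simp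
    then have "0 \<le> (1-X) * (7*X*(X-1/3)^2 + 35/3*(X-1/3)^2 + 19/27) / 18" by simp
    ultimately show ?thesis by linarith
  qed
  ultimately show ?thesis by linarith
qed

lemma hankel_ge:
  assumes "0 \<le> \<beta>" "\<beta> < 1"
  shows "5/9*(1-\<beta>)^2 \<le> hankel_bound \<beta>"
proof (cases "\<beta> \<le> (11 - sqrt 37) / 12")
  case True
  have "2 \<le> sqrt 37" by (simp add: real_le_rsqrt)
  then have "(11 - sqrt 37) / 12 \<le> 3/4" by (simp add: field_simps)
  then have "\<beta> \<le> 3/4" using True by linarith
  then have "1/4 \<le> 1 - \<beta>" by simp
  then have t: "(1/4)^2 \<le> (1-\<beta>)^2" by (rule power_mono) simp
  have "5/9 \<le> (1 + 2 * (1 - \<beta>)^2) / 2" using t by (simp add: power2_eq_square)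
  then have "(1-\<beta>)^2 * (5/9) \<le> (1-\<beta>)^2 * ((1 + 2 * (1 - \<beta>)^2) / 2)"
    by (rule mult_left_mono) simp
  then have "5/9*(1-\<beta>)^2 \<le> (1 - \<beta>)^2 * (1 + 2 * (1 - \<beta>)^2) / 2"
    by (simp add: mult.commute)
  then show ?thesis using True by (simp add: hankel_bound_def)
next
  case False
  have "sqrt 37 \<le> 7" by (rule real_le_lsqrt) auto
  then have "1/3 \<le> (11 - sqrt 37) / 12" by (simp add: field_simps)
  then have b3: "\<beta> > 1/3" using False by linarith
  have D: "9 * \<beta>^2 - 15 * \<beta> + 1 < 0"
  proof -
    have "9 * \<beta>^2 - 15 * \<beta> + 1 = 9*(\<beta> - 1/3)*(\<beta> - 1) - 3*\<beta> -2" by (simp add: algebra_simps power2_eq_square)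
    moreover have "9*(\<beta> - 1/3)*(\<beta> - 1) \<le> 0" using b3 assms by (intro mult_nonneg_nonpos) auto
    ultimately show ?thesis using b3 by linarith
  qed
  have key: "5/9 \<le> (60 * \<beta>^2 - 84 * \<beta> - 25) / (16 * (9 * \<beta>^2 - 15 * \<beta> + 1))"
  proof -
    have "0 \<le> 180*(\<beta> - 37/30)^2 + 1" by simp
    then have "9*(60 * \<beta>^2 - 84 * \<beta> - 25) \<le> 80 * (9 * \<beta>^2 - 15 * \<beta> + 1)"
      by (simp add: algebra_simps power2_eq_square)
    then show ?thesis using D by (simp add: le_divide_eq)
  qed
  have m: "(1-\<beta>)^2 * (5/9) \<le> (1-\<beta>)^2 * ((60 * \<beta>^2 - 84 * \<beta> - 25) / (16 * (9 * \<beta>^2 - 15 * \<beta> + 1)))"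
    by (rule mult_left_mono[OF key]) simp
  have h: "hankel_bound \<beta> = (1-\<beta>)^2 * ((60 * \<beta>^2 - 84 * \<beta> - 25) / (16 * (9 * \<beta>^2 - 15 * \<beta> + 1)))"
    using False unfolding hankel_bound_def by simp
  show ?thesis unfolding h using m by (simp add: mult.commute)
qed



theorem corollary4p4:
  fixes \<beta> :: real and f :: "complex \<Rightarrow> complex"
  assumes "0 \<le> \<beta>" and "\<beta> < 1" and "f \<in> H_sigma \<beta>"
  shows "norm (taylor_coeff f 2 * taylor_coeff f 4 - (taylor_coeff f 3)^2) \<le> hankel_bound \<beta>"
proof -
  from assms(3) obtain g where bi: "bi_univalent_inv f g" and sub: "subordinate (deriv f) (p_beta \<beta>)"
    unfolding H_sigma_def by auto
  from sub obtain w where holw: "w holomorphic_on ball 0 1" and w0: "w 0 = 0"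
      and hw: "\<forall>z\<in>ball 0 1. norm (w z) < 1 \<and> deriv f z = p_beta \<beta> (w z)"
    unfolding subordinate_def unit_disc_def by auto
  have wlt: "norm (w z) < 1" if "norm z < 1" for z using hw that by auto
  have holf: "f holomorphic_on ball 0 1" and df0: "deriv f 0 = 1"
    using bi unfolding bi_univalent_inv_def unit_disc_def by auto
  have holG: "deriv f holomorphic_on ball 0 1" by (rule holomorphic_deriv[OF holf]) auto
  define c where "c = complex_of_real (1 - 2*\<beta>)"
  have eq: "deriv f z - 1 = w z * (deriv f z + c)" if z: "z \<in> ball 0 1" for z
  proof -
    have n1: "norm (w z) < 1" and dz: "deriv f z = p_beta \<beta> (w z)" using hw z by auto
    have "w z \<noteq> 1" using n1 by auto
    then have ne: "1 - w z \<noteq> 0" by simp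
    have "deriv f z = (1 + c * w z) / (1 - w z)" using dz by (simp add: p_beta_def c_def)
    then have "deriv f z * (1 - w z) = 1 + c * w z" using ne by (simp add: divide_simps)
    then show ?thesis by (simp add: algebra_simps)
  qed
  define D where "D k = (deriv ^^ k) (deriv f) 0" for k
  define W where "W k = (deriv ^^ k) w 0" for k
  have rel: "D n = (\<Sum>i=0..n. of_nat (n choose i) * W i * (D (n-i) + (if n - i = 0 then c else 0)))"
    if n: "n \<ge> 1" for n
  proof -
    have "(deriv ^^ n) (\<lambda>z. deriv f z - 1) 0 = (deriv ^^ n) (\<lambda>z. w z * (deriv f z + c)) 0"
      by (rule higher_deriv_cong_ev) (use ev_ball eq in \<open>auto elim!: eventually_mono\<close>)
    moreover have "(deriv ^^ n) (\<lambda>z. deriv f z - 1) 0 = D n"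
      using higher_deriv_diff[OF holG, of "\<lambda>_. 1" 0 n] n by (simp add: D_def)
    moreover have "(deriv ^^ n) (\<lambda>z. w z * (deriv f z + c)) 0 =
        (\<Sum>i=0..n. of_nat (n choose i) * (deriv ^^ i) w 0 * (deriv ^^ (n-i)) (\<lambda>z. deriv f z + c) 0)"
      by (rule higher_deriv_mult[of _ "ball 0 1"]) (auto intro!: holomorphic_intros holw holG)
    moreover have "(deriv ^^ k) (\<lambda>z. deriv f z + c) 0 = D k + (if k = 0 then c else 0)" for k
      using higher_deriv_add[OF holG, of "\<lambda>_. c" 0 k] by (simp add: D_def)
    ultimately show ?thesis by (simp add: W_def)
  qed
  have W0: "W 0 = 0" by (simp add: W_def w0)
  have D0: "D 0 = 1" by (simp add: D_def df0)
  define s where "s = 1 + c"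
  have D1: "D 1 = W 1 * s" using rel[of 1] W0 D0 by (simp add: s_def)
  have D2: "D 2 = 2 * W 1 * D 1 + W 2 * s" using rel[of 2] W0 D0 by (simp add: s_def eval_nat_numeral)
  have D3: "D 3 = 3 * W 1 * D 2 + 3 * W 2 * D 1 + W 3 * s" using rel[of 3] W0 D0 by (simp add: s_def eval_nat_numeral)
  have tc: "taylor_coeff f (Suc k) = D k / fact (Suc k)" for k
    by (simp add: taylor_coeff_def D_def funpow_Suc_right del: funpow.simps) (simp add: algebra_simps)
  have a2: "taylor_coeff f 2 = D 1 / 2" using tc[of 1] by (simp add: numeral_2_eq_2)
  have a3: "taylor_coeff f 3 = D 2 / 6" using tc[of 2] by (simp add: numeral_3_eq_3 fact_numeral)
  have a4: "taylor_coeff f 4 = D 3 / 24" using tc[of 3] by (simp add: eval_nat_numeral fact_numeral)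
  define x where "x = W 1"
  define y where "y = W 2 / 2"
  define u where "u = W 3 / 6"
  have s_eq: "s = 2 * of_real (1 - \<beta>)" by (simp add: s_def c_def)
  have alg: "taylor_coeff f 2 * taylor_coeff f 4 - (taylor_coeff f 3)^2
      = of_real ((1-\<beta>)^2) * (x*u/2 + x^2*y/9 + x^4/18 - 4*y^2/9)"
  proof -
    have W2: "W 2 = 2*y" and W3: "W 3 = 6*u" by (simp_all add: y_def u_def)
    show ?thesis unfolding a2 a3 a4 D3 D2 D1 W2 W3 x_def[symmetric] s_eq
      by (simp add: field_simps power2_eq_square power4_eq_xxxx)
  qed
  have bx: "norm x \<le> 1" using Schwarz_Lemma(2)[OF holw w0 wlt, of 0] by (simp add: x_def W_def)
  have by': "norm y \<le> 1 - norm x ^ 2" using schwarz_c2[OF holw w0 wlt] by (simp add: x_def y_def W_def norm_divide)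
  have bu: "norm u \<le> 1" using schwarz_c3[OF holw wlt] by (simp add: u_def W_def norm_divide)
  have "norm (x*u/2 + x^2*y/9 + x^4/18 - 4*y^2/9)
        \<le> norm x * norm u/2 + norm x^2*norm y/9 + norm x^4/18 + 4*norm y^2/9"
  proof -
    have "norm (x*u/2 + x^2*y/9 + x^4/18 - 4*y^2/9)
        \<le> norm (x*u/2) + norm (x^2*y/9) + norm (x^4/18) + norm (4*y^2/9)"
      by (smt (verit) norm_triangle_ineq norm_triangle_ineq4)
    also have "\<dots> = norm x * norm u/2 + norm x^2*norm y/9 + norm x^4/18 + 4*norm y^2/9"
      by (simp add: norm_mult norm_divide norm_power)
    finally show ?thesis .
  qed
  also have "\<dots> \<le> 5/9"
    by (rule poly_ineq) (use bx by' bu in \<open>auto\<close>)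
  finally have E: "norm (x*u/2 + x^2*y/9 + x^4/18 - 4*y^2/9) \<le> 5/9" .
  have "norm (taylor_coeff f 2 * taylor_coeff f 4 - (taylor_coeff f 3)^2)
        = (1-\<beta>)^2 * norm (x*u/2 + x^2*y/9 + x^4/18 - 4*y^2/9)"
    unfolding alg norm_mult norm_of_real by simp
  also have "\<dots> \<le> (1-\<beta>)^2 * (5/9)" using E by (rule mult_left_mono) simp
  also have "\<dots> \<le> hankel_bound \<beta>" using hankel_ge[OF assms(1,2)] by (simp add: mult.commute)
  finally show ?thesis .
qed


end
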